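(* Assume (A1)–(A4). Let $T>0$ and $N\ge0$. For $K\ge1$ let $u^K$ solve $$\frac{d}{dt}u^{K}_i(t)=R(i\delta_K)+\sum_{l\in\mathbb{Z}}p((l+i)\delta_K)h_KG(lh_K)e^{\log K(u^{K}_{l+i}(t)-u^{K}_i(t))},\quad u^K_i(0)=u^{K,0}(i\delta_K).$$ Then there is a constant $C$ (possibly depending on $T$ and $N$) such that for all $K\ge1$, $t\in[0,T]$ and $i\in\mathbb{Z}$ with $i\delta_K\in[-N,N]$, $$\Big|\frac{u^K_{i+1}(t)-u^K_i(t)}{\delta_K}\Big|\le C.$$
   Context: Let $R,p,G:\mathbb{R}\to\mathbb{R}$; for each integer $K\ge1$ let $\delta_K>0$ with $\delta_K\to0$ and $h_K:=\delta_K\log K\to0$. (A1) $R,p$ Lipschitz with $\underline{R}\le R\le\overline{R}$, $0<\underline{p}\le p\le\overline{p}$. (A2) $G$ positive continuous, $\int G=1$, $G(x)=f(x)e^{-|x|}$ with $0<\min f\le f\le\sup f<\infty$. (A3) $u^{K,0}(i\delta_K)\le-A|i\delta_K|+B_1$ for all $i,K$, constants $A,B_1>0$. (A4) There is $L\in(0,1)$ with $|u^{K,0}((i+1)\delta_K)-u^{K,0}(i\delta_K)|\le L\delta_K$ for all $i,K$. *)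

theory Defs
  imports "HOL-Analysis.Analysis"
begin

definition hK :: "(nat \<Rightarrow> real) \<Rightarrow> nat \<Rightarrow> real" where
  "hK delta K = delta K * ln (real K)"

definition rhs_term ::
  "(real \<Rightarrow> real) \<Rightarrow> (real \<Rightarrow> real) \<Rightarrow> (nat \<Rightarrow> real) \<Rightarrow> (nat \<Rightarrow> int \<Rightarrow> real \<Rightarrow> real)
    \<Rightarrow> nat \<Rightarrow> int \<Rightarrow> real \<Rightarrow> int \<Rightarrow> real" where
  "rhs_term p G delta u K i t l =
     p (real_of_int (l + i) * delta K) * hK delta K * G (real_of_int l * hK delta K)
       * exp (ln (real K) * (u K (l + i) t - u K i t))"

end

theory Submission
  imports Defs
begin

lemma mono_deriv:
  fixes f f' :: "real \<Rightarrow> real"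
  assumes ab: "a \<le> b"
    and d: "\<And>x. x \<in> {a..b} \<Longrightarrow> (f has_real_derivative f' x) (at x within {a..b})"
    and nn: "\<And>x. x \<in> {a..b} \<Longrightarrow> f' x \<ge> 0"
  shows "f a \<le> f b"
proof -
  have "\<exists>x\<in>{a..b}. f b - f a = (\<lambda>h. f' x * h) (b - a)"
    by (rule mvt_very_simple[OF ab]) (use d in \<open>auto simp: has_field_derivative_def\<close>)
  then obtain x where "x \<in> {a..b}" "f b - f a = f' x * (b - a)" by auto
  moreover have "f' x * (b - a) \<ge> 0" using nn[OF \<open>x \<in> {a..b}\<close>] ab by simp
  ultimately show ?thesis by simp
qed

lemma mono_deriv_sub:
  fixes f f' :: "real \<Rightarrow> real"
  assumes ab: "a \<le> b" and sub: "{a..b} \<subseteq> S"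
    and d: "\<And>x. x \<in> S \<Longrightarrow> (f has_real_derivative f' x) (at x within S)"
    and nn: "\<And>x. x \<in> {a..b} \<Longrightarrow> f' x \<ge> 0"
  shows "f a \<le> f b"
proof (rule mono_deriv[where f'=f', OF ab])
  fix x assume "x \<in> {a..b}"
  then show "(f has_real_derivative f' x) (at x within {a..b})"
    using DERIV_subset[OF d sub] sub by blast
qed (use nn in auto)

lemma scalar_gronwall:
  fixes f f' :: "real \<Rightarrow> real" and r c :: real
  assumes c: "0 \<le> c" and r: "r \<ge> 0"
    and d: "\<And>x. x \<in> {0..c} \<Longrightarrow> (f has_real_derivative f' x) (at x within {0..c})"
    and ineq: "\<And>x. x \<in> {0..c} \<Longrightarrow> f' x \<ge> r * f x"
    and f0: "f 0 \<ge> 0"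
    and t: "t \<in> {0..c}"
  shows "f t \<ge> 0"
proof -
  let ?g = "\<lambda>x. exp (- r * x) * f x"
  have dg: "(?g has_real_derivative (exp (- r * x) * (- r) * f x + exp (- r * x) * f' x)) (at x within {0..c})"
    if "x \<in> {0..c}" for x
    by (rule derivative_eq_intros refl d[OF that] | simp)+
  have "?g 0 \<le> ?g t"
    apply (rule mono_deriv_sub[where S="{0..c}", OF _ _ dg])
    using t ineq by (auto simp: algebra_simps)
  then have "f 0 \<le> exp (- r * t) * f t" by simp
  with f0 have "0 \<le> exp (- r * t) * f t" by linarith
  then show ?thesis by (simp add: zero_le_mult_iff)
qed

lemma comparison_base:
  fixes D V D' V' :: "int \<Rightarrow> real \<Rightarrow> real" and r :: "int \<Rightarrow> real"
    and k :: "int \<Rightarrow> int \<Rightarrow> real" and T :: real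
  assumes T: "T > 0"
    and r: "\<And>i. r i \<ge> 0" and k: "\<And>i l. k i l \<ge> 0"
    and dD: "\<And>i t. t \<in> {0..T} \<Longrightarrow> (D i has_real_derivative D' i t) (at t within {0..T})"
    and dV: "\<And>i t. t \<in> {0..T} \<Longrightarrow> (V i has_real_derivative V' i t) (at t within {0..T})"
    and sD: "\<And>i t. t \<in> {0..T} \<Longrightarrow> (\<lambda>l. k i l * D (i+l) t) summable_on UNIV"
    and sV: "\<And>i t. t \<in> {0..T} \<Longrightarrow> (\<lambda>l. k i l * V (i+l) t) summable_on UNIV"
    and iD: "\<And>i t. t \<in> {0..T} \<Longrightarrow> D' i t \<ge> r i * D i t + (\<Sum>\<^sub>\<infinity>l. k i l * D (i+l) t)"
    and iV: "\<And>i t. t \<in> {0..T} \<Longrightarrow> V' i t \<ge> r i * V i t + (\<Sum>\<^sub>\<infinity>l. k i l * V (i+l) t)"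
    and Vnn: "\<And>i t. t \<in> {0..T} \<Longrightarrow> V i t \<ge> 0"
    and D0: "\<And>i. D i 0 \<ge> 0"
    and DV: "\<And>i t. t \<in> {0..T} \<Longrightarrow> D i t \<ge> - V i t"
    and t: "t \<in> {0..T}"
  shows "D i t \<ge> 0"
proof -
  have V'nn: "V' i t \<ge> 0" if "t \<in> {0..T}" for i t
  proof -
    have "(\<Sum>\<^sub>\<infinity>l. k i l * V (i+l) t) \<ge> 0"
      by (rule infsum_nonneg) (use k Vnn that in auto)
    moreover have "r i * V i t \<ge> 0" using r Vnn that by simp
    ultimately show ?thesis using iV[OF that, of i] by linarith
  qed
  have Vmono: "V i s \<le> V i t" if "0 \<le> s" "s \<le> t" "t \<le> T" for i s t
    by (rule mono_deriv_sub[where S="{0..T}", OF _ _ dV]) (use that V'nn in auto)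
  have main: "D i t \<ge> - (\<theta>^n) * V i (t/\<theta>)"
    if th: "0 < \<theta>" "\<theta> < 1" and tt: "t \<in> {0..\<theta>*T}" for \<theta> n i t
    using tt
  proof (induction n arbitrary: i t)
    case 0
    have "\<theta> * t \<le> t" using mult_left_le_one_le[of t \<theta>] 0 th by auto
    then have "t \<le> t/\<theta>" using th by (simp add: field_simps)
    moreover have "t/\<theta> \<le> T" using 0 th by (simp add: field_simps)
    ultimately have "V i t \<le> V i (t/\<theta>)" using Vmono 0 by auto
    moreover have "D i t \<ge> - V i t" using DV 0 th
      by (smt (verit, best) atLeastAtMost_iff mult_le_cancel_right1 T)
    ultimately show ?case by simp
  next
    case (Suc n)
    have sub: "{0..\<theta>*T} \<subseteq> {0..T}" using th T by (auto simp: mult_le_cancel_right1)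
    have img: "(\<lambda>x. x/\<theta>) ` {0..\<theta>*T} = {0..T}"
    proof
      show "(\<lambda>x. x/\<theta>) ` {0..\<theta>*T} \<subseteq> {0..T}" using th by (auto simp: field_simps)
      show "{0..T} \<subseteq> (\<lambda>x. x/\<theta>) ` {0..\<theta>*T}"
      proof
        fix y assume "y \<in> {0..T}"
        then have "\<theta>*y \<in> {0..\<theta>*T}" "y = (\<theta>*y)/\<theta>" using th by auto
        then show "y \<in> (\<lambda>x. x/\<theta>) ` {0..\<theta>*T}" by blast
      qed
    qed
    let ?F = "\<lambda>x. D i x + \<theta>^(Suc n) * V i (x/\<theta>)"
    let ?F' = "\<lambda>x. D' i x + \<theta>^(Suc n) * (V' i (x/\<theta>) * (1/\<theta>))"
    have dF: "(?F has_real_derivative ?F' x) (at x within {0..\<theta>*T})" if x: "x \<in> {0..\<theta>*T}" for x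
    proof -
      have "((V i) \<circ> (\<lambda>x. x/\<theta>) has_real_derivative V' i (x/\<theta>) * (1/\<theta>)) (at x within {0..\<theta>*T})"
      proof (rule DERIV_image_chain)
        have "x/\<theta> \<in> {0..T}" using img x by blast
        then show "(V i has_real_derivative V' i (x/\<theta>)) (at (x/\<theta>) within (\<lambda>x. x/\<theta>) ` {0..\<theta>*T})"
          using dV img by simp
        show "((\<lambda>x. x/\<theta>) has_real_derivative 1/\<theta>) (at x within {0..\<theta>*T})"
          using DERIV_cdivide[OF DERIV_ident, of \<theta> x "{0..\<theta>*T}"] by simp
      qed
      then have a: "((\<lambda>x. V i (x/\<theta>)) has_real_derivative V' i (x/\<theta>) * (1/\<theta>)) (at x within {0..\<theta>*T})"
        by (simp add: o_def)
      have b: "(D i has_real_derivative D' i x) (at x within {0..\<theta>*T})"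
        using DERIV_subset[OF dD sub] x sub by blast
      show ?thesis by (intro DERIV_add b DERIV_cmult a)
    qed
    have ineq: "?F' x \<ge> r i * ?F x" if x: "x \<in> {0..\<theta>*T}" for x
    proof -
      have xT: "x \<in> {0..T}" using x sub by blast
      have xq: "x/\<theta> \<in> {0..T}" using img x by blast
      have s1: "(\<lambda>l. k i l * D (i+l) x) summable_on UNIV" using sD xT by blast
      have s2: "(\<lambda>l. \<theta>^n * (k i l * V (i+l) (x/\<theta>))) summable_on UNIV"
        using sV[OF xq] by (rule summable_on_cmult_right)
      have "(\<Sum>\<^sub>\<infinity>l. k i l * D (i+l) x) + \<theta>^n * (\<Sum>\<^sub>\<infinity>l. k i l * V (i+l) (x/\<theta>))
          = (\<Sum>\<^sub>\<infinity>l. k i l * D (i+l) x + \<theta>^n * (k i l * V (i+l) (x/\<theta>)))"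
        using infsum_add[OF s1 s2] infsum_cmult_right[OF sV[OF xq]] by simp
      also have "\<dots> \<ge> 0"
      proof (rule infsum_nonneg)
        fix l :: int
        have "D (i+l) x \<ge> - (\<theta>^n) * V (i+l) (x/\<theta>)" using Suc.IH x by blast
        then have "k i l * (D (i+l) x + \<theta>^n * V (i+l) (x/\<theta>)) \<ge> 0" using k by simp
        then show "k i l * D (i+l) x + \<theta>^n * (k i l * V (i+l) (x/\<theta>)) \<ge> 0"
          by (simp add: algebra_simps)
      qed
      finally have sum: "(\<Sum>\<^sub>\<infinity>l. k i l * D (i+l) x) + \<theta>^n * (\<Sum>\<^sub>\<infinity>l. k i l * V (i+l) (x/\<theta>)) \<ge> 0" .
      have "?F' x = D' i x + \<theta>^n * V' i (x/\<theta>)" using th by (simp add: field_simps)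
      also have "\<dots> \<ge> r i * D i x + (\<Sum>\<^sub>\<infinity>l. k i l * D (i+l) x)
            + \<theta>^n * (r i * V i (x/\<theta>) + (\<Sum>\<^sub>\<infinity>l. k i l * V (i+l) (x/\<theta>)))"
        using iD[OF xT] iV[OF xq] th by (intro add_mono) (auto intro: mult_left_mono)
      finally have A: "?F' x \<ge> r i * D i x + \<theta>^n * (r i * V i (x/\<theta>))" using sum
        by (simp add: algebra_simps)
      have "\<theta>^(Suc n) * (r i * V i (x/\<theta>)) \<le> \<theta>^n * (r i * V i (x/\<theta>))"
        using th r[of i] Vnn[OF xq] by (simp add: mult_left_le_one_le mult_nonneg_nonneg)
      with A show ?thesis by (simp add: algebra_simps)
    qed
    have F0: "?F 0 \<ge> 0" using D0[of i] Vnn[of 0 i] T th by simp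
    have c0: "0 \<le> \<theta>*T" using th T by simp
    have "?F t \<ge> 0"
      by (rule scalar_gronwall[OF c0 r dF ineq F0 Suc.prems])
    then show ?case by simp
  qed
  show ?thesis
  proof (cases "t < T")
    case True
    define \<theta> where "\<theta> = (t/T + 1)/2"
    have th: "0 < \<theta>" "\<theta> < 1" using t T True by (auto simp: \<theta>_def field_simps)
    have tt: "t \<in> {0..\<theta>*T}" using t T by (auto simp: \<theta>_def field_simps)
    have "t/\<theta> \<le> T" using tt th by (simp add: field_simps mult.commute)
    have b: "- D i t \<le> \<theta>^n * V i T" for n
    proof -
      have "V i (t/\<theta>) \<le> V i T" using Vmono[of "t/\<theta>" T i] \<open>t/\<theta> \<le> T\<close> t th by auto
      then have "\<theta>^n * V i (t/\<theta>) \<le> \<theta>^n * V i T" using th by (simp add: mult_left_mono)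
      with main[OF th tt, of n i] show ?thesis by simp
    qed
    have "(\<lambda>n. \<theta>^n * V i T) \<longlonglongrightarrow> 0 * V i T"
      by (intro tendsto_mult tendsto_const LIMSEQ_power_zero) (use th in auto)
    then have "- D i t \<le> 0 * V i T"
      by (rule LIMSEQ_le_const) (use b in auto)
    then show ?thesis by simp
  next
    case False
    then have tT: "t = T" using t by auto
    have "continuous (at T within {0..T}) (D i)"
      using DERIV_continuous[OF dD] T by auto
    then have lim: "(D i \<longlongrightarrow> D i T) (at_left T)"
      using at_within_Icc_at_left[OF T] by (simp add: continuous_within)
    have pos: "\<forall>\<^sub>F x in at_left T. 0 \<le> D i x"
    proof -
      have "\<forall>\<^sub>F x in at_left T. x \<in> {0<..<T}" by (rule eventually_at_left_real[OF T])
      then show ?thesis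
      proof (rule eventually_mono)
        fix x assume x: "x \<in> {0<..<T}"
        define \<theta> where "\<theta> = (x/T + 1)/2"
        have th: "0 < \<theta>" "\<theta> < 1" using x T by (auto simp: \<theta>_def field_simps)
        have tt: "x \<in> {0..\<theta>*T}" using x T by (auto simp: \<theta>_def field_simps)
        have "x/\<theta> \<le> T" using tt th by (simp add: field_simps mult.commute)
        have b: "- D i x \<le> \<theta>^n * V i T" for n
        proof -
          have "V i (x/\<theta>) \<le> V i T" using Vmono[of "x/\<theta>" T i] \<open>x/\<theta> \<le> T\<close> x th by auto
          then have "\<theta>^n * V i (x/\<theta>) \<le> \<theta>^n * V i T" using th by (simp add: mult_left_mono)
          with main[OF th tt, of n i] show ?thesis by simp
        qed
        have "(\<lambda>n. \<theta>^n * V i T) \<longlonglongrightarrow> 0 * V i T"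
          by (intro tendsto_mult tendsto_const LIMSEQ_power_zero) (use th in auto)
        then have "- D i x \<le> 0 * V i T"
          by (rule LIMSEQ_le_const) (use b in auto)
        then show "0 \<le> D i x" by simp
      qed
    qed
    have "0 \<le> D i T"
      by (rule tendsto_lowerbound[OF lim pos]) simp
    then show ?thesis using tT by simp
  qed
qed

lemma comparison:
  fixes D V D' V' :: "int \<Rightarrow> real \<Rightarrow> real" and r :: "int \<Rightarrow> real"
    and k :: "int \<Rightarrow> int \<Rightarrow> real" and T \<rho> :: real
  assumes T: "T > 0"
    and r: "\<And>i. r i + \<rho> \<ge> 0" and k: "\<And>i l. k i l \<ge> 0"
    and dD: "\<And>i t. t \<in> {0..T} \<Longrightarrow> (D i has_real_derivative D' i t) (at t within {0..T})"
    and dV: "\<And>i t. t \<in> {0..T} \<Longrightarrow> (V i has_real_derivative V' i t) (at t within {0..T})"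
    and sD: "\<And>i t. t \<in> {0..T} \<Longrightarrow> (\<lambda>l. k i l * D (i+l) t) summable_on UNIV"
    and sV: "\<And>i t. t \<in> {0..T} \<Longrightarrow> (\<lambda>l. k i l * V (i+l) t) summable_on UNIV"
    and iD: "\<And>i t. t \<in> {0..T} \<Longrightarrow> D' i t \<ge> r i * D i t + (\<Sum>\<^sub>\<infinity>l. k i l * D (i+l) t)"
    and iV: "\<And>i t. t \<in> {0..T} \<Longrightarrow> V' i t \<ge> r i * V i t + (\<Sum>\<^sub>\<infinity>l. k i l * V (i+l) t)"
    and Vnn: "\<And>i t. t \<in> {0..T} \<Longrightarrow> V i t \<ge> 0"
    and D0: "\<And>i. D i 0 \<ge> 0"
    and DV: "\<And>i t. t \<in> {0..T} \<Longrightarrow> D i t \<ge> - V i t"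
    and t: "t \<in> {0..T}"
  shows "D i t \<ge> 0"
proof -
  define Dh where "Dh = (\<lambda>i t. exp (\<rho> * t) * D i t)"
  define Vh where "Vh = (\<lambda>i t. exp (\<rho> * t) * V i t)"
  define Dh' where "Dh' = (\<lambda>i t. exp (\<rho> * t) * (\<rho> * D i t + D' i t))"
  define Vh' where "Vh' = (\<lambda>i t. exp (\<rho> * t) * (\<rho> * V i t + V' i t))"
  have sum_scale: "(\<Sum>\<^sub>\<infinity>l. k i l * (exp (\<rho> * t) * F (i+l) t)) = exp (\<rho> * t) * (\<Sum>\<^sub>\<infinity>l. k i l * F (i+l) t)"
    if "(\<lambda>l. k i l * F (i+l) t) summable_on UNIV" for F :: "int \<Rightarrow> real \<Rightarrow> real" and i t
  proof -
    have "(\<Sum>\<^sub>\<infinity>l. k i l * (exp (\<rho> * t) * F (i+l) t)) = (\<Sum>\<^sub>\<infinity>l. exp (\<rho> * t) * (k i l * F (i+l) t))"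
      by (simp add: algebra_simps)
    also have "\<dots> = exp (\<rho> * t) * (\<Sum>\<^sub>\<infinity>l. k i l * F (i+l) t)"
      by (rule infsum_cmult_right) (use that in simp)
    finally show ?thesis .
  qed
  have sum_scale_s: "(\<lambda>l. k i l * (exp (\<rho> * t) * F (i+l) t)) summable_on UNIV"
    if "(\<lambda>l. k i l * F (i+l) t) summable_on UNIV"
    for F :: "int \<Rightarrow> real \<Rightarrow> real" and i t
  proof -
    have "(\<lambda>l. exp (\<rho> * t) * (k i l * F (i+l) t)) summable_on UNIV"
      using that by (rule summable_on_cmult_right)
    then show ?thesis by (simp add: algebra_simps)
  qed
  have "Dh i t \<ge> 0"
  proof (rule comparison_base[where r="\<lambda>i. r i + \<rho>" and k=k and D'=Dh' and V=Vh and V'=Vh', OF T r k _ _ _ _ _ _ _ _ _ t])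
    show "(Dh i has_real_derivative Dh' i t) (at t within {0..T})" if "t \<in> {0..T}" for i t
      unfolding Dh_def Dh'_def
      by (rule derivative_eq_intros refl dD[OF that] | simp add: algebra_simps)+
    show "(Vh i has_real_derivative Vh' i t) (at t within {0..T})" if "t \<in> {0..T}" for i t
      unfolding Vh_def Vh'_def
      by (rule derivative_eq_intros refl dV[OF that] | simp add: algebra_simps)+
    show "(\<lambda>l. k i l * Dh (i+l) t) summable_on UNIV" if "t \<in> {0..T}" for i t
      unfolding Dh_def by (rule sum_scale_s[where F=D, OF sD[OF that]])
    show "(\<lambda>l. k i l * Vh (i+l) t) summable_on UNIV" if "t \<in> {0..T}" for i t
      unfolding Vh_def by (rule sum_scale_s[where F=V, OF sV[OF that]])
    show "Dh' i t \<ge> (r i + \<rho>) * Dh i t + (\<Sum>\<^sub>\<infinity>l. k i l * Dh (i+l) t)" if "t \<in> {0..T}" for i t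
    proof -
      have "exp (\<rho> * t) * (r i * D i t + (\<Sum>\<^sub>\<infinity>l. k i l * D (i+l) t)) \<le> exp (\<rho> * t) * D' i t"
        using iD[OF that, of i] by simp
      then show ?thesis unfolding Dh_def Dh'_def sum_scale[where F=D, OF sD[OF that]] by (simp add: algebra_simps)
    qed
    show "Vh' i t \<ge> (r i + \<rho>) * Vh i t + (\<Sum>\<^sub>\<infinity>l. k i l * Vh (i+l) t)" if "t \<in> {0..T}" for i t
    proof -
      have "exp (\<rho> * t) * (r i * V i t + (\<Sum>\<^sub>\<infinity>l. k i l * V (i+l) t)) \<le> exp (\<rho> * t) * V' i t"
        using iV[OF that, of i] by simp
      then show ?thesis unfolding Vh_def Vh'_def sum_scale[where F=V, OF sV[OF that]] by (simp add: algebra_simps)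
    qed
    show "Vh i t \<ge> 0" if "t \<in> {0..T}" for i t using Vnn[OF that] unfolding Vh_def by simp
    show "Dh i 0 \<ge> 0" for i using D0[of i] unfolding Dh_def by simp
    show "Dh i t \<ge> - Vh i t" if "t \<in> {0..T}" for i t
    proof -
      have "exp (\<rho> * t) * (- V i t) \<le> exp (\<rho> * t) * D i t"
        using DV[OF that, of i] by (intro mult_left_mono) auto
      then show ?thesis unfolding Dh_def Vh_def by simp
    qed
  qed
  then show ?thesis unfolding Dh_def by (simp add: zero_le_mult_iff)
qed

lemma infsum_diff_real:
  fixes f g :: "'a \<Rightarrow> real"
  assumes "f summable_on A" "g summable_on A"
  shows "(\<Sum>\<^sub>\<infinity>x\<in>A. f x - g x) = (\<Sum>\<^sub>\<infinity>x\<in>A. f x) - (\<Sum>\<^sub>\<infinity>x\<in>A. g x)"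
proof -
  have g': "(\<lambda>x. - g x) summable_on A" using assms(2) by (simp add: summable_on_uminus)
  have "(\<Sum>\<^sub>\<infinity>x\<in>A. f x + - g x) = (\<Sum>\<^sub>\<infinity>x\<in>A. f x) + (\<Sum>\<^sub>\<infinity>x\<in>A. - g x)"
    by (rule infsum_add[OF assms(1) g'])
  then show ?thesis by (simp add: infsum_uminus)
qed

lemma summable_on_diff_real:
  fixes f g :: "'a \<Rightarrow> real"
  assumes "f summable_on A" "g summable_on A"
  shows "(\<lambda>x. f x - g x) summable_on A"
proof -
  have g': "(\<lambda>x. - g x) summable_on A" using assms(2) by (simp add: summable_on_uminus)
  show ?thesis using summable_on_add[OF assms(1) g'] by simp
qed

lemma comparison_diff:
  fixes Z W Z' W' :: "int \<Rightarrow> real \<Rightarrow> real" and r :: "int \<Rightarrow> real"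
    and k :: "int \<Rightarrow> int \<Rightarrow> real" and T \<rho> :: real
  assumes T: "T > 0"
    and r: "\<And>i. r i + \<rho> \<ge> 0" and k: "\<And>i l. k i l \<ge> 0"
    and dW: "\<And>i t. t \<in> {0..T} \<Longrightarrow> (W i has_real_derivative W' i t) (at t within {0..T})"
    and dZ: "\<And>i t. t \<in> {0..T} \<Longrightarrow> (Z i has_real_derivative Z' i t) (at t within {0..T})"
    and sW: "\<And>i t. t \<in> {0..T} \<Longrightarrow> (\<lambda>l. k i l * W (i+l) t) summable_on UNIV"
    and sZ: "\<And>i t. t \<in> {0..T} \<Longrightarrow> (\<lambda>l. k i l * Z (i+l) t) summable_on UNIV"
    and eW: "\<And>i t. t \<in> {0..T} \<Longrightarrow> W' i t = r i * W i t + (\<Sum>\<^sub>\<infinity>l. k i l * W (i+l) t)"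
    and iZ: "\<And>i t. t \<in> {0..T} \<Longrightarrow> Z' i t \<ge> r i * Z i t + (\<Sum>\<^sub>\<infinity>l. k i l * Z (i+l) t)"
    and Wnn: "\<And>i t. t \<in> {0..T} \<Longrightarrow> W i t \<ge> 0"
    and Znn: "\<And>i t. t \<in> {0..T} \<Longrightarrow> Z i t \<ge> 0"
    and init: "\<And>i. W i 0 \<le> Z i 0"
    and t: "t \<in> {0..T}"
  shows "W i t \<le> Z i t"
proof -
  have "(\<lambda>i t. Z i t - W i t) i t \<ge> 0"
  proof (rule comparison[where r=r and k=k and \<rho>=\<rho> and V=W and V'=W' and D'="\<lambda>i t. Z' i t - W' i t", OF T r k _ dW _ sW _ _ Wnn _ _ t])
    show "((\<lambda>t. Z i t - W i t) has_real_derivative Z' i t - W' i t) (at t within {0..T})"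
      if "t \<in> {0..T}" for i t
      by (rule DERIV_diff[OF dZ[OF that] dW[OF that]])
    show "(\<lambda>l. k i l * (Z (i+l) t - W (i+l) t)) summable_on UNIV" if "t \<in> {0..T}" for i t
      using summable_on_diff_real[OF sZ[OF that, of i] sW[OF that, of i]] by (simp add: algebra_simps)
    show "Z' i t - W' i t \<ge> r i * (Z i t - W i t) + (\<Sum>\<^sub>\<infinity>l. k i l * (Z (i+l) t - W (i+l) t))"
      if "t \<in> {0..T}" for i t
    proof -
      have "(\<Sum>\<^sub>\<infinity>l. k i l * (Z (i+l) t - W (i+l) t)) = (\<Sum>\<^sub>\<infinity>l. k i l * Z (i+l) t - k i l * W (i+l) t)"
        by (simp add: algebra_simps)
      also have "\<dots> = (\<Sum>\<^sub>\<infinity>l. k i l * Z (i+l) t) - (\<Sum>\<^sub>\<infinity>l. k i l * W (i+l) t)"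
        by (rule infsum_diff_real[OF sZ[OF that, of i] sW[OF that, of i]])
      finally show ?thesis using iZ[OF that, of i] eW[OF that, of i] by (simp add: algebra_simps)
    qed
    show "W' i t \<ge> r i * W i t + (\<Sum>\<^sub>\<infinity>l. k i l * W (i+l) t)" if "t \<in> {0..T}" for i t
      using eW[OF that, of i] by simp
    show "Z i 0 - W i 0 \<ge> 0" for i using init[of i] by simp
    show "Z i t - W i t \<ge> - W i t" if "t \<in> {0..T}" for i t using Znn[OF that, of i] by simp
  qed
  then show ?thesis by simp
qed

lemma deriv_upper:
  fixes f :: "real \<Rightarrow> real"
  assumes T: "T > 0" and t: "t \<in> {0..T}"
    and d: "(f has_real_derivative f') (at t within {0..T})"
    and q: "\<And>x y. 0 \<le> x \<Longrightarrow> x \<le> y \<Longrightarrow> y \<le> T \<Longrightarrow> f y - f x \<le> M * (y - x)"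
  shows "f' \<le> M"
proof -
  have lim: "((\<lambda>y. (f y - f t) / (y - t)) \<longlongrightarrow> f') (at t within {0..T})"
    using d by (simp add: has_field_derivative_iff)
  have ev: "\<forall>\<^sub>F y in at t within {0..T}. (f y - f t) / (y - t) \<le> M"
    unfolding eventually_at_filter
  proof (rule always_eventually, intro allI impI)
    fix y assume ne: "y \<noteq> t" and y: "y \<in> {0..T}"
    show "(f y - f t) / (y - t) \<le> M"
    proof (cases "y > t")
      case True
      then have "f y - f t \<le> M * (y - t)" using q[of t y] t y by auto
      then show ?thesis using True by (simp add: divide_le_eq)
    next
      case False
      then have lt: "y < t" using ne by auto
      then have "f t - f y \<le> M * (t - y)" using q[of y t] t y by auto
      then have "(f t - f y) / (t - y) \<le> M" using lt by (simp add: divide_le_eq)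
      moreover have "(f y - f t) / (y - t) = (f t - f y) / (t - y)"
        by (simp add: divide_simps) (simp add: algebra_simps)
      ultimately show ?thesis by simp
    qed
  qed
  have nt: "\<not> trivial_limit (at t within {0..T})"
    using t T by (simp add: trivial_limit_within)
  show ?thesis by (rule tendsto_upperbound[OF lim ev nt])
qed

lemma per_K:
  fixes U :: "int \<Rightarrow> real \<Rightarrow> real" and a :: "int \<Rightarrow> int \<Rightarrow> real" and Rs :: "int \<Rightarrow> real"
    and lam \<delta> T L LR \<kappa> Rlo Rhi M0 :: real
  assumes lam: "lam > 0" and dl: "\<delta> > 0" and T: "T > 0"
    and a: "\<And>i l. a i l \<ge> 0"
    and ash: "\<And>i l \<sigma>. \<sigma> \<in> {1,-1} \<Longrightarrow> a (i+\<sigma>) l \<le> (1 + \<kappa>*\<delta>) * a i l"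
    and ka: "\<kappa> \<ge> 0"
    and Rlip: "\<And>i \<sigma>. \<sigma> \<in> {1,-1} \<Longrightarrow> Rs (i+\<sigma>) - Rs i \<le> LR * \<delta>"
    and Rb: "\<And>i. Rlo \<le> Rs i \<and> Rs i \<le> Rhi"
    and summ: "\<And>i t. t \<in> {0..T} \<Longrightarrow> (\<lambda>l. a i l * exp (lam * (U (i+l) t - U i t))) summable_on UNIV"
    and ode: "\<And>i t. t \<in> {0..T} \<Longrightarrow> (U i has_real_derivative
                 Rs i + (\<Sum>\<^sub>\<infinity>l. a i l * exp (lam * (U (i+l) t - U i t)))) (at t within {0..T})"
    and M0: "\<And>i. (\<Sum>\<^sub>\<infinity>l. a i l * exp (lam * (U (i+l) 0 - U i 0))) \<le> M0"
    and A4: "\<And>i. \<bar>U (i+1) 0 - U i 0\<bar> \<le> L * \<delta>"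
    and t: "t \<in> {0..T}"
  shows "\<bar>U (i+1) t - U i t\<bar> \<le> \<delta> * (L + (LR + \<kappa> * (Rhi + M0 - Rlo)) * T)"
proof -
  define S where "S i t = (\<Sum>\<^sub>\<infinity>l. a i l * exp (lam * (U (i+l) t - U i t)))" for i t
  define w where "w i t = exp (lam * U i t)" for i t
  define k where "k i l = lam * a i l" for i l
  define r where "r i = lam * Rs i" for i
  define \<rho> where "\<rho> = lam * \<bar>Rlo\<bar>"
  define M where "M = Rhi + M0"
  define M1 where "M1 = M - Rlo"
  have r\<rho>: "r i + \<rho> \<ge> 0" for i
  proof -
    have "Rs i + \<bar>Rlo\<bar> \<ge> 0" using Rb[of i] by linarith
    then have "lam * (Rs i + \<bar>Rlo\<bar>) \<ge> 0" using lam by simp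
    then show ?thesis unfolding r_def \<rho>_def by (simp add: algebra_simps)
  qed
  have k0: "k i l \<ge> 0" for i l unfolding k_def using a lam by simp
  have S0: "S i t \<ge> 0" for i t unfolding S_def by (rule infsum_nonneg) (use a in simp)
  have wpos: "w i t > 0" for i t unfolding w_def by simp
  have id_s: "(\<lambda>l. k i l * (c * w (i+l) t)) summable_on UNIV" 
    and id_e: "(\<Sum>\<^sub>\<infinity>l. k i l * (c * w (i+l) t)) = lam * c * w i t * S i t"
    if tt: "t \<in> {0..T}" for i t c
  proof -
    have eq: "k i l * (c * w (i+l) t) = (lam * c * w i t) * (a i l * exp (lam * (U (i+l) t - U i t)))" for l
    proof -
      have "exp (lam * U (i+l) t) = exp (lam * U i t) * exp (lam * (U (i+l) t - U i t))"
        by (simp add: exp_add[symmetric] algebra_simps)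
      then show ?thesis unfolding k_def w_def by (simp add: algebra_simps)
    qed
    show "(\<lambda>l. k i l * (c * w (i+l) t)) summable_on UNIV"
      unfolding eq by (rule summable_on_cmult_right[OF summ[OF tt]])
    show "(\<Sum>\<^sub>\<infinity>l. k i l * (c * w (i+l) t)) = lam * c * w i t * S i t"
      unfolding eq S_def by (rule infsum_cmult_right) (use summ[OF tt] in simp)
  qed
  have dw: "(w i has_real_derivative lam * w i t * (Rs i + S i t)) (at t within {0..T})"
    if tt: "t \<in> {0..T}" for i t
  proof -
    have "((\<lambda>t. exp (lam * U i t)) has_real_derivative exp (lam * U i t) * (lam * (Rs i + S i t))) (at t within {0..T})"
      by (rule DERIV_chain2[OF DERIV_exp DERIV_cmult[OF ode[OF tt, folded S_def]]])
    then show ?thesis unfolding w_def by (rule DERIV_cong) (simp add: algebra_simps)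
  qed
  have sw: "(\<lambda>l. k i l * w (i+l) t) summable_on UNIV" if "t \<in> {0..T}" for i t
    using id_s[OF that, of i 1] by simp
  have ew: "lam * w i t * (Rs i + S i t) = r i * w i t + (\<Sum>\<^sub>\<infinity>l. k i l * w (i+l) t)"
    if "t \<in> {0..T}" for i t
    using id_e[OF that, of i 1] unfolding r_def by (simp add: algebra_simps)
  have stepA: "U i t \<le> U i 0 + M * t" if tt: "t \<in> {0..T}" for i t
  proof -
    define Z where "Z i t = exp (lam * M * t) * w i 0" for i t
    have "w i t \<le> Z i t"
    proof (rule comparison_diff[where r=r and k=k and \<rho>=\<rho> and W=w and Z=Z and W'="\<lambda>i t. lam * w i t * (Rs i + S i t)"
          and Z'="\<lambda>i t. lam * M * Z i t", OF T r\<rho> k0 dw _ sw _ ew _ _ _ _ tt])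
      show "(Z i has_real_derivative lam * M * Z i t) (at t within {0..T})" for i t
      proof -
        have "((\<lambda>t. exp ((lam * M) * t)) has_real_derivative exp ((lam * M) * t) * ((lam * M) * 1)) (at t within {0..T})"
          by (rule DERIV_chain2[OF DERIV_exp DERIV_cmult[OF DERIV_ident]])
        then have "((\<lambda>t. exp (lam * M * t)) has_real_derivative exp (lam * M * t) * (lam * M)) (at t within {0..T})"
          by simp
        then have "((\<lambda>t. exp (lam * M * t) * w i 0) has_real_derivative exp (lam * M * t) * (lam * M) * w i 0) (at t within {0..T})"
          by (rule DERIV_cmult_right)
        then show ?thesis unfolding Z_def by (rule DERIV_cong) (simp add: algebra_simps)
      qed
      show "(\<lambda>l. k i l * Z (i+l) t) summable_on UNIV" for i t
        unfolding Z_def using id_s[of 0 i "exp (lam * M * t)"] T by simp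
      show "lam * M * Z i t \<ge> r i * Z i t + (\<Sum>\<^sub>\<infinity>l. k i l * Z (i+l) t)" for i t
      proof -
        have e: "(\<Sum>\<^sub>\<infinity>l. k i l * Z (i+l) t) = lam * Z i t * S i 0"
          unfolding Z_def using id_e[of 0 i "exp (lam * M * t)"] T by (simp add: algebra_simps)
        have "Rs i + S i 0 \<le> M" unfolding M_def S_def using Rb[of i] M0[of i] by simp
        then have "lam * Z i t * (Rs i + S i 0) \<le> lam * Z i t * M"
          using lam by (intro mult_left_mono) (auto simp: Z_def w_def)
        then show ?thesis unfolding e r_def by (simp add: algebra_simps)
      qed
      show "w i t \<ge> 0" for i t using wpos[of i t] by simp
      show "Z i t \<ge> 0" for i t unfolding Z_def w_def by simp
      show "w i 0 \<le> Z i 0" for i unfolding Z_def by simp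
    qed
    then have "exp (lam * U i t) \<le> exp (lam * (U i 0 + M * t))"
      unfolding Z_def w_def by (simp add: exp_add[symmetric] algebra_simps)
    then have "lam * U i t \<le> lam * (U i 0 + M * t)" by simp
    then show ?thesis using lam by simp
  qed
  have stepB: "U i y - U i x \<le> M * (y - x)" if xy: "0 \<le> x" "x \<le> y" "y \<le> T" for i x y
  proof (cases "x = 0 \<or> x = y")
    case True then show ?thesis using stepA[of y i] xy by auto
  next
    case False
    define s where "s = y - x"
    define T' where "T' = T - s"
    have s: "0 < s" "s < T" using False xy unfolding s_def by auto
    have T': "T' > 0" unfolding T'_def using s by simp
    have img: "(\<lambda>t. t + s) ` {0..T'} \<subseteq> {0..T}" unfolding T'_def using s by auto
    have inT: "t + s \<in> {0..T}" if "t \<in> {0..T'}" for t using img that by blast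
    define W where "W i t = w i (t + s)" for i t
    define Z where "Z i t = exp (lam * M * s) * w i t" for i t
    have "W i x \<le> Z i x"
    proof (rule comparison_diff[where r=r and k=k and \<rho>=\<rho> and T=T' and W=W and Z=Z
          and W'="\<lambda>i t. lam * w i (t+s) * (Rs i + S i (t+s))"
          and Z'="\<lambda>i t. exp (lam * M * s) * (lam * w i t * (Rs i + S i t))", OF T' r\<rho> k0])
      show "(W i has_real_derivative lam * w i (t+s) * (Rs i + S i (t+s))) (at t within {0..T'})"
        if tt: "t \<in> {0..T'}" for i t
      proof -
        have d1: "(w i has_real_derivative lam * w i (t+s) * (Rs i + S i (t+s))) (at (t+s) within (\<lambda>t. t + s) ` {0..T'})"
          by (rule DERIV_subset[OF dw[OF inT[OF tt]] img])
        have d2: "((\<lambda>t. t + s) has_real_derivative 1) (at t within {0..T'})"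
          using DERIV_add[OF DERIV_ident DERIV_const[of s]] by simp
        show ?thesis using DERIV_image_chain[OF d1 d2] unfolding W_def by (simp add: o_def)
      qed
      show "(Z i has_real_derivative exp (lam * M * s) * (lam * w i t * (Rs i + S i t))) (at t within {0..T'})"
        if tt: "t \<in> {0..T'}" for i t
        unfolding Z_def
        by (rule DERIV_cmult, rule DERIV_subset[OF dw]) (use tt s in \<open>auto simp: T'_def\<close>)
      show "(\<lambda>l. k i l * W (i+l) t) summable_on UNIV" if tt: "t \<in> {0..T'}" for i t
        unfolding W_def by (rule sw[OF inT[OF tt]])
      show "(\<lambda>l. k i l * Z (i+l) t) summable_on UNIV" if tt: "t \<in> {0..T'}" for i t
        unfolding Z_def by (rule id_s) (use tt s in \<open>auto simp: T'_def\<close>)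
      show "lam * w i (t+s) * (Rs i + S i (t+s)) = r i * W i t + (\<Sum>\<^sub>\<infinity>l. k i l * W (i+l) t)"
        if tt: "t \<in> {0..T'}" for i t
        unfolding W_def by (rule ew[OF inT[OF tt]])
      show "exp (lam * M * s) * (lam * w i t * (Rs i + S i t)) \<ge> r i * Z i t + (\<Sum>\<^sub>\<infinity>l. k i l * Z (i+l) t)"
        if tt: "t \<in> {0..T'}" for i t
      proof -
        have t0: "t \<in> {0..T}" using tt s by (auto simp: T'_def)
        have "(\<Sum>\<^sub>\<infinity>l. k i l * Z (i+l) t) = lam * exp (lam * M * s) * w i t * S i t"
          unfolding Z_def by (rule id_e[OF t0])
        then show ?thesis unfolding Z_def r_def by (simp add: algebra_simps)
      qed
      show "W i t \<ge> 0" for i t unfolding W_def using wpos[of i] by (simp add: less_imp_le)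
      show "Z i t \<ge> 0" for i t unfolding Z_def using wpos[of i] by (simp add: less_imp_le)
      show "W i 0 \<le> Z i 0" for i
      proof -
        have "U i s \<le> U i 0 + M * s" using stepA[of s i] s by auto
        then have "lam * U i s \<le> lam * M * s + lam * U i 0" using lam
          by (metis add.commute distrib_left mult.assoc mult_left_mono less_imp_le)
        then have "exp (lam * U i s) \<le> exp (lam * M * s + lam * U i 0)" by simp
        then show ?thesis unfolding W_def Z_def w_def by (simp add: exp_add)
      qed
      show "x \<in> {0..T'}" using xy unfolding T'_def s_def by auto
    qed
    then have "exp (lam * U i y) \<le> exp (lam * M * s + lam * U i x)"
      unfolding W_def Z_def w_def s_def by (simp add: exp_add)
    then have "lam * U i y \<le> lam * M * s + lam * U i x" by simp
    then have "lam * (U i y - U i x) \<le> lam * (M * s)" by (simp add: algebra_simps)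
    then show ?thesis using lam unfolding s_def by simp
  qed
  have Sle: "S i t \<le> M1" if tt: "t \<in> {0..T}" for i t
  proof -
    have "Rs i + S i t \<le> M"
      by (rule deriv_upper[OF T tt ode[OF tt, folded S_def]]) (rule stepB; assumption)
    then show ?thesis unfolding M1_def using Rb[of i] by linarith
  qed
  have LR0: "LR \<ge> 0"
  proof -
    have "Rs (0+1) - Rs 0 \<le> LR * \<delta>" by (rule Rlip) simp
    moreover have "Rs (1 + -1) - Rs 1 \<le> LR * \<delta>" by (rule Rlip) simp
    ultimately have "LR * \<delta> \<ge> 0" by simp
    then show ?thesis using dl by (simp add: zero_le_mult_iff)
  qed
  have M1nn: "M1 \<ge> 0" using S0[of 0 0] Sle[of 0 0] T by fastforce
  define c where "c = \<delta> * (LR + \<kappa> * M1)"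
  have c0: "c \<ge> 0" unfolding c_def using dl LR0 ka M1nn by simp
  have stepC: "U (i+\<sigma>) t \<le> U i t + L * \<delta> + c * t"
    if sg: "\<sigma> \<in> {1,-1}" and tt: "t \<in> {0..T}" for \<sigma> i t
  proof -
    define W where "W i t = w (i+\<sigma>) t" for i t
    define E where "E t = exp (lam * (L * \<delta> + c * t))" for t
    define Z where "Z i t = E t * w i t" for i t
    define k' where "k' i l = lam * a (i+\<sigma>) l" for i l
    define r' where "r' i = lam * Rs (i+\<sigma>)" for i
    have Epos: "E t > 0" for t unfolding E_def by simp
    have k'0: "k' i l \<ge> 0" for i l unfolding k'_def using a lam by simp
    have r'\<rho>: "r' i + \<rho> \<ge> 0" for i using r\<rho>[of "i+\<sigma>"] unfolding r'_def r_def by simp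
    have Wsh: "k' i l * W (i+l) t = k (i+\<sigma>) l * (1 * w ((i+\<sigma>)+l) t)" for i l t
      unfolding k'_def W_def k_def by (simp add: ac_simps)
    have kZ: "k' i l * Z (i+l) t \<le> (1 + \<kappa>*\<delta>) * (k i l * (E t * w (i+l) t))" for i l t
    proof -
      have "a (i+\<sigma>) l \<le> (1 + \<kappa>*\<delta>) * a i l" by (rule ash[OF sg])
      then have "lam * E t * w (i+l) t * a (i+\<sigma>) l \<le> lam * E t * w (i+l) t * ((1 + \<kappa>*\<delta>) * a i l)"
        using lam Epos[of t] wpos[of "i+l" t] by (intro mult_left_mono) auto
      then show ?thesis unfolding k'_def Z_def k_def by (simp add: algebra_simps)
    qed
    have kZ0: "k' i l * Z (i+l) t \<ge> 0" for i l t
      unfolding Z_def using k'0[of i l] Epos[of t] wpos[of "i+l" t] by simp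
    have sZ: "(\<lambda>l. k' i l * Z (i+l) t) summable_on UNIV" if tt: "t \<in> {0..T}" for i t
    proof (rule summable_on_comparison_test[OF _ kZ kZ0])
      show "(\<lambda>l. (1 + \<kappa>*\<delta>) * (k i l * (E t * w (i+l) t))) summable_on UNIV"
        by (rule summable_on_cmult_right[OF id_s[OF tt]])
    qed
    have dZ: "(Z i has_real_derivative E t * (lam * c) * w i t + E t * (lam * w i t * (Rs i + S i t))) (at t within {0..T})"
      if tt: "t \<in> {0..T}" for i t
    proof -
      have "((\<lambda>t. lam * (L * \<delta> + c * t)) has_real_derivative lam * (0 + c * 1)) (at t within {0..T})"
        by (intro DERIV_cmult DERIV_add DERIV_const DERIV_ident)
      then have "(E has_real_derivative E t * (lam * (0 + c * 1))) (at t within {0..T})"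
        unfolding E_def by (rule DERIV_chain2[OF DERIV_exp])
      then have dE: "(E has_real_derivative E t * (lam * c)) (at t within {0..T})" by simp
      show ?thesis unfolding Z_def by (rule DERIV_cong[OF DERIV_mult[OF dE dw[OF tt]]]) (simp add: algebra_simps)
    qed
    have "W i t \<le> Z i t"
    proof (rule comparison_diff[where r=r' and k=k' and \<rho>=\<rho> and W=W and Z=Z
          and W'="\<lambda>i t. lam * w (i+\<sigma>) t * (Rs (i+\<sigma>) + S (i+\<sigma>) t)"
          and Z'="\<lambda>i t. E t * (lam * c) * w i t + E t * (lam * w i t * (Rs i + S i t))",
          OF T r'\<rho> k'0 _ dZ _ sZ _ _ _ _ _ tt])
      show "(W i has_real_derivative lam * w (i+\<sigma>) t * (Rs (i+\<sigma>) + S (i+\<sigma>) t)) (at t within {0..T})"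
        if "t \<in> {0..T}" for i t unfolding W_def by (rule dw[OF that])
      show "(\<lambda>l. k' i l * W (i+l) t) summable_on UNIV" if "t \<in> {0..T}" for i t
        unfolding Wsh by (rule id_s[OF that])
      show "lam * w (i+\<sigma>) t * (Rs (i+\<sigma>) + S (i+\<sigma>) t) = r' i * W i t + (\<Sum>\<^sub>\<infinity>l. k' i l * W (i+l) t)"
        if "t \<in> {0..T}" for i t
        unfolding Wsh using id_e[OF that, of "i+\<sigma>" 1] unfolding r'_def W_def by (simp add: algebra_simps)
      show "E t * (lam * c) * w i t + E t * (lam * w i t * (Rs i + S i t)) \<ge> r' i * Z i t + (\<Sum>\<^sub>\<infinity>l. k' i l * Z (i+l) t)"
        if tt: "t \<in> {0..T}" for i t
      proof -
        have "(\<Sum>\<^sub>\<infinity>l. k' i l * Z (i+l) t) \<le> (\<Sum>\<^sub>\<infinity>l. (1 + \<kappa>*\<delta>) * (k i l * (E t * w (i+l) t)))"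
          by (rule infsum_mono[OF sZ[OF tt] summable_on_cmult_right[OF id_s[OF tt]] kZ])
        also have "\<dots> = (1 + \<kappa>*\<delta>) * (lam * E t * w i t * S i t)"
          using infsum_cmult_right[OF id_s[OF tt], of "1 + \<kappa>*\<delta>" i "E t"] id_e[OF tt, of i "E t"] by simp
        finally have sb: "(\<Sum>\<^sub>\<infinity>l. k' i l * Z (i+l) t) \<le> (1 + \<kappa>*\<delta>) * (lam * E t * w i t * S i t)" .
        have P: "lam * E t * w i t > 0" using lam Epos[of t] wpos[of i t] by simp
        have "Rs (i+\<sigma>) - Rs i \<le> LR * \<delta>" by (rule Rlip[OF sg])
        moreover have "\<kappa> * \<delta> * S i t \<le> \<kappa> * \<delta> * M1"
          using Sle[OF tt, of i] ka dl by (intro mult_left_mono) auto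
        ultimately have "Rs (i+\<sigma>) + (1 + \<kappa>*\<delta>) * S i t \<le> c + Rs i + S i t"
          unfolding c_def by (simp add: algebra_simps)
        then have "(lam * E t * w i t) * (Rs (i+\<sigma>) + (1 + \<kappa>*\<delta>) * S i t) \<le> (lam * E t * w i t) * (c + Rs i + S i t)"
          using P by (intro mult_left_mono) auto
        then show ?thesis using sb unfolding r'_def Z_def by (simp add: algebra_simps)
      qed
      show "W i t \<ge> 0" for i t unfolding W_def using wpos by (simp add: less_imp_le)
      show "Z i t \<ge> 0" for i t unfolding Z_def using wpos Epos by (simp add: less_imp_le)
      show "W i 0 \<le> Z i 0" for i
      proof -
        have "U (i+\<sigma>) 0 - U i 0 \<le> L * \<delta>"
        proof (cases "\<sigma> = 1")
          case True then show ?thesis using A4[of i] by simp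
        next
          case False then have "\<sigma> = -1" using sg by simp
          then show ?thesis using A4[of "i-1"] by simp
        qed
        then have "lam * U (i+\<sigma>) 0 \<le> lam * (L * \<delta>) + lam * U i 0" using lam
          by (metis add.commute diff_le_eq distrib_left mult_left_mono less_imp_le)
        then have "exp (lam * U (i+\<sigma>) 0) \<le> exp (lam * (L * \<delta>) + lam * U i 0)" by simp
        then show ?thesis unfolding W_def Z_def E_def w_def by (simp add: exp_add)
      qed
    qed
    then have "exp (lam * U (i+\<sigma>) t) \<le> exp (lam * (L * \<delta> + c * t) + lam * U i t)"
      unfolding W_def Z_def E_def w_def by (simp add: exp_add)
    then have "lam * U (i+\<sigma>) t \<le> lam * (L * \<delta> + c * t + U i t)" by (simp add: algebra_simps)
    then show ?thesis using lam by simp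
  qed
  have ct: "c * t \<le> c * T" using c0 t by (intro mult_left_mono) auto
  have b: "L * \<delta> + c * T = \<delta> * (L + (LR + \<kappa> * (Rhi + M0 - Rlo)) * T)"
    unfolding c_def M1_def M_def by (simp add: algebra_simps)
  have u1: "U (i+1) t - U i t \<le> L * \<delta> + c * T" using stepC[of 1 t i] t ct by simp
  have u2: "U i t - U (i+1) t \<le> L * \<delta> + c * T" using stepC[of "-1" t "i+1"] t ct by simp
  show ?thesis using u1 u2 b by linarith
qed

lemma geom_int:
  fixes x :: real
  assumes x0: "0 \<le> x" and x1: "x < 1"
  shows "((\<lambda>l::int. x ^ nat \<bar>l\<bar>) has_sum ((1 + x) / (1 - x))) UNIV"
proof -
  have h1: "((\<lambda>n::nat. x ^ n) has_sum (1 / (1 - x))) UNIV"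
    by (rule sums_nonneg_imp_has_sum) (use geometric_sums[of x] x0 x1 in auto)
  have "(\<lambda>n::nat. x * x ^ n) sums (x * (1 / (1 - x)))"
    by (rule sums_mult) (use geometric_sums[of x] x0 x1 in auto)
  then have h2: "((\<lambda>n::nat. x ^ Suc n) has_sum (x / (1 - x))) UNIV"
    by (intro sums_nonneg_imp_has_sum) (use x0 in auto)
  have p1: "((\<lambda>l::int. x ^ nat \<bar>l\<bar>) has_sum (1 / (1 - x))) {0..}"
    using h1 by (subst has_sum_reindex_bij_witness[where j=nat and i=int and T=UNIV and h="\<lambda>n. x^n"]) auto
  have p2: "((\<lambda>l::int. x ^ nat \<bar>l\<bar>) has_sum (x / (1 - x))) {..<0}"
  proof (subst has_sum_reindex_bij_witness[where j="\<lambda>a. nat (-a-1)" and i="\<lambda>b. - int b - 1" and T=UNIV and h="\<lambda>n. x ^ Suc n"])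
    show "((\<lambda>n. x ^ Suc n) has_sum (x / (1 - x))) UNIV" by (rule h2)
    show "x ^ Suc (nat (- a - 1)) = x ^ nat \<bar>a\<bar>" if "a \<in> {..<0}" for a :: int
    proof -
      have "Suc (nat (- a - 1)) = nat \<bar>a\<bar>" using that by auto
      then show ?thesis by simp
    qed
  qed auto
  have "((\<lambda>l::int. x ^ nat \<bar>l\<bar>) has_sum (1 / (1 - x) + x / (1 - x))) ({0..} \<union> {..<0})"
    by (rule has_sum_Un_disjoint[OF p1 p2]) auto
  moreover have "({0..} \<union> {..<0}) = (UNIV :: int set)" by auto
  moreover have "1 / (1 - x) + x / (1 - x) = (1 + x) / (1 - x)" by (simp add: add_divide_distrib)
  ultimately show ?thesis by simp
qed

lemma chain_int:
  fixes f :: "int \<Rightarrow> real"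
  assumes "\<And>i. \<bar>f (i+1) - f i\<bar> \<le> c"
  shows "\<bar>f (i+l) - f i\<bar> \<le> c * \<bar>l\<bar>"
proof -
  have nat: "\<bar>f (j + int n) - f j\<bar> \<le> c * n" for j n
  proof (induction n)
    case 0 then show ?case by simp
  next
    case (Suc n)
    have "\<bar>f (j + int (Suc n)) - f (j + int n)\<bar> \<le> c"
    proof -
      have "j + int (Suc n) = (j + int n) + 1" by simp
      then show ?thesis using assms[of "j + int n"] by metis
    qed
    with Suc show ?case by (simp add: algebra_simps)
  qed
  show ?thesis
  proof (cases "l \<ge> 0")
    case True
    then show ?thesis using nat[of i "nat l"] by simp
  next
    case False
    then have "\<bar>f ((i+l) + int (nat (-l))) - f (i+l)\<bar> \<le> c * nat (-l)" using nat by blast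
    then show ?thesis using False by (simp add: abs_minus_commute)
  qed
qed

lemma K1_case:
  fixes U :: "int \<Rightarrow> real \<Rightarrow> real" and Rs :: "int \<Rightarrow> real" and \<delta> T L LR :: real
  assumes T: "T > 0"
    and Rlip: "\<And>i. \<bar>Rs (i+1) - Rs i\<bar> \<le> LR * \<delta>"
    and ode: "\<And>i t. t \<in> {0..T} \<Longrightarrow> (U i has_real_derivative Rs i) (at t within {0..T})"
    and A4: "\<And>i. \<bar>U (i+1) 0 - U i 0\<bar> \<le> L * \<delta>"
    and LR: "LR * \<delta> \<ge> 0"
    and t: "t \<in> {0..T}"
  shows "\<bar>U (i+1) t - U i t\<bar> \<le> L * \<delta> + LR * \<delta> * T"
proof -
  define g where "g s = (U (i+1) s - U i s) - (U (i+1) 0 - U i 0)" for s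
  have dg: "(g has_real_derivative (Rs (i+1) - Rs i)) (at s within {0..T})" if "s \<in> {0..T}" for s
    unfolding g_def using DERIV_diff[OF DERIV_diff[OF ode[OF that] ode[OF that]] DERIV_const] by simp
  have "\<exists>c. \<forall>s\<in>{0..T}. (\<lambda>s. g s - (Rs (i+1) - Rs i) * s) s = c"
  proof (rule has_field_derivative_zero_constant)
    show "convex {0..T}" by simp
    fix s assume s: "s \<in> {0..T}"
    show "((\<lambda>s. g s - (Rs (i+1) - Rs i) * s) has_real_derivative 0) (at s within {0..T})"
      using DERIV_diff[OF dg[OF s] DERIV_cmult[OF DERIV_ident, of "Rs (i+1) - Rs i"]] by simp
  qed
  then obtain c where c: "\<And>s. s \<in> {0..T} \<Longrightarrow> g s - (Rs (i+1) - Rs i) * s = c" by blast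
  have "c = 0" using c[of 0] T by (simp add: g_def)
  then have "g t = (Rs (i+1) - Rs i) * t" using c[OF t] by simp
  then have eq: "U (i+1) t - U i t = (U (i+1) 0 - U i 0) + (Rs (i+1) - Rs i) * t" unfolding g_def by simp
  have "\<bar>(Rs (i+1) - Rs i) * t\<bar> \<le> LR * \<delta> * T"
  proof -
    have "\<bar>(Rs (i+1) - Rs i) * t\<bar> = \<bar>Rs (i+1) - Rs i\<bar> * t" using t by (simp add: abs_mult)
    also have "\<dots> \<le> LR * \<delta> * t" using Rlip[of i] t by (intro mult_right_mono) auto
    also have "\<dots> \<le> LR * \<delta> * T" using LR t by (intro mult_left_mono) auto
    finally show ?thesis .
  qed
  then show ?thesis using eq A4[of i] by linarith
qed

lemma M0_bound:
  fixes a V :: "int \<Rightarrow> real" and h H L phi fhi lam \<delta> :: real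
  assumes h: "h > 0" "h \<le> H" and L: "0 < L" "L < 1" and phi: "phi \<ge> 0" and fhi: "fhi \<ge> 0"
    and lam: "lam > 0" and dl: "\<delta> > 0" and hdef: "h = \<delta> * lam"
    and abd: "\<And>l. a l \<le> phi * h * (fhi * exp (- (\<bar>real_of_int l\<bar> * h)))"
    and Vbd: "\<And>l. V l \<le> L * \<delta> * \<bar>real_of_int l\<bar>"
    and sm: "(\<lambda>l. a l * exp (lam * V l)) summable_on UNIV"
  shows "(\<Sum>\<^sub>\<infinity>l. a l * exp (lam * V l)) \<le> phi * fhi * (2 * (1 + (1 - L) * H) / (1 - L))"
proof -
  define \<beta> where "\<beta> = 1 - L"
  have b0: "\<beta> > 0" unfolding \<beta>_def using L by simp
  define x where "x = exp (- (\<beta> * h))"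
  have x0: "0 \<le> x" unfolding x_def by simp
  have x1: "x < 1" unfolding x_def using b0 h by simp
  have termb: "a l * exp (lam * V l) \<le> phi * fhi * h * x ^ nat \<bar>l\<bar>" for l
  proof -
    have e1: "exp (lam * V l) \<le> exp (L * \<bar>real_of_int l\<bar> * h)"
    proof -
      have "lam * V l \<le> lam * (L * \<delta> * \<bar>real_of_int l\<bar>)" using Vbd[of l] lam by (intro mult_left_mono) auto
      also have "\<dots> = L * \<bar>real_of_int l\<bar> * h" unfolding hdef by (simp add: algebra_simps)
      finally show ?thesis by simp
    qed
    have "a l * exp (lam * V l) \<le> (phi * h * (fhi * exp (- (\<bar>real_of_int l\<bar> * h)))) * exp (L * \<bar>real_of_int l\<bar> * h)"
      by (rule mult_mono[OF abd e1]) (use phi fhi h in auto)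
    also have "\<dots> = phi * fhi * h * exp (- (\<beta> * h) * real (nat \<bar>l\<bar>))"
    proof -
      have "exp (- (\<bar>real_of_int l\<bar> * h)) * exp (L * \<bar>real_of_int l\<bar> * h) = exp (- (\<beta> * h) * real (nat \<bar>l\<bar>))"
        unfolding \<beta>_def by (simp add: exp_add[symmetric] algebra_simps)
      then show ?thesis by (simp add: algebra_simps)
    qed
    also have "exp (- (\<beta> * h) * real (nat \<bar>l\<bar>)) = x ^ nat \<bar>l\<bar>"
      unfolding x_def using exp_of_nat_mult[of "nat \<bar>l\<bar>" "- (\<beta> * h)"] by (simp add: mult.commute)
    finally show ?thesis .
  qed
  have hs: "((\<lambda>l::int. phi * fhi * h * x ^ nat \<bar>l\<bar>) has_sum (phi * fhi * h * ((1 + x) / (1 - x)))) UNIV"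
    by (rule has_sum_cmult_right[OF geom_int[OF x0 x1]])
  have "(\<Sum>\<^sub>\<infinity>l. a l * exp (lam * V l)) \<le> (\<Sum>\<^sub>\<infinity>l::int. phi * fhi * h * x ^ nat \<bar>l\<bar>)"
    by (rule infsum_mono[OF sm _ termb]) (use hs in \<open>auto simp: summable_on_def\<close>)
  also have "\<dots> = phi * fhi * (h * ((1 + x) / (1 - x)))" using hs by (simp add: infsumI)
  also have "\<dots> \<le> phi * fhi * (2 * (1 + (1 - L) * H) / (1 - L))"
  proof (rule mult_left_mono)
    show "0 \<le> phi * fhi" using phi fhi by simp
    have "1 + \<beta> * h \<le> exp (\<beta> * h)" by (rule exp_ge_add_one_self)
    moreover have "x = 1 / exp (\<beta> * h)" unfolding x_def by (simp add: exp_minus inverse_eq_divide)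
    moreover have bp: "0 < 1 + \<beta> * h" using b0 h by (simp add: add_pos_pos)
    ultimately have xle: "x \<le> 1 / (1 + \<beta> * h)"
      by (metis divide_left_mono mult_pos_pos exp_gt_zero zero_le_one)
    have d: "\<beta> * h / (1 + \<beta> * h) \<le> 1 - x"
    proof -
      have ne: "1 + \<beta> * h \<noteq> 0" using b0 h by (smt (verit) mult_pos_pos)
      have "1 - 1 / (1 + \<beta> * h) = \<beta> * h / (1 + \<beta> * h)" using ne by (simp add: field_simps)
      then show ?thesis using xle by linarith
    qed
    have bp2: "0 < 1 + \<beta> * h" using b0 h by (smt (verit) mult_pos_pos)
    have dpos: "0 < \<beta> * h / (1 + \<beta> * h)" using b0 h bp2 by simp
    have "h * ((1 + x) / (1 - x)) = (h * (1 + x)) / (1 - x)" by simp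
    also have "\<dots> \<le> (2 * h) / (\<beta> * h / (1 + \<beta> * h))"
      by (rule frac_le) (use h x1 dpos d in auto)
    also have "\<dots> = 2 * (1 + \<beta> * h) / \<beta>" using b0 h bp2 by (simp add: field_simps)
    also have "\<dots> \<le> 2 * (1 + \<beta> * H) / \<beta>"
      using b0 h by (intro divide_right_mono) (auto intro: mult_left_mono)
    finally show "h * ((1 + x) / (1 - x)) \<le> 2 * (1 + (1 - L) * H) / (1 - L)" unfolding \<beta>_def .
  qed
  finally show ?thesis .
qed

theorem proposition4p2:
  fixes R p G :: "real \<Rightarrow> real"
    and delta :: "nat \<Rightarrow> real"
    and u0 :: "nat \<Rightarrow> real \<Rightarrow> real"
    and u :: "nat \<Rightarrow> int \<Rightarrow> real \<Rightarrow> real"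
    and T N :: real
  assumes delta_pos: "\<forall>K\<ge>1. delta K > 0"
    and delta_lim: "delta \<longlonglongrightarrow> 0"
    and h_lim: "hK delta \<longlonglongrightarrow> 0"
    and A1_R: "\<exists>LR. lipschitz_on LR UNIV R"
    and A1_p: "\<exists>Lp. lipschitz_on Lp UNIV p"
    and A1_Rbd: "\<exists>Rlo Rhi. \<forall>x. Rlo \<le> R x \<and> R x \<le> Rhi"
    and A1_pbd: "\<exists>plo phi. 0 < plo \<and> (\<forall>x. plo \<le> p x \<and> p x \<le> phi)"
    and A2_pos: "\<forall>x. G x > 0"
    and A2_cont: "continuous_on UNIV G"
    and A2_int: "(G has_integral 1) UNIV"
    and A2_f: "\<exists>f flo fhi. 0 < flo \<and> (\<forall>x. flo \<le> f x \<and> f x \<le> fhi)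
                 \<and> (\<forall>x. G x = f x * exp (- \<bar>x\<bar>))"
    and A3: "\<exists>A B1. A > 0 \<and> B1 > 0 \<and> (\<forall>K\<ge>1. \<forall>i::int.
               u0 K (real_of_int i * delta K) \<le> - A * \<bar>real_of_int i * delta K\<bar> + B1)"
    and A4: "\<exists>L. 0 < L \<and> L < 1 \<and> (\<forall>K\<ge>1. \<forall>i::int.
               \<bar>u0 K (real_of_int (i + 1) * delta K) - u0 K (real_of_int i * delta K)\<bar>
                 \<le> L * delta K)"
    and T_pos: "T > 0"
    and N_nonneg: "N \<ge> 0"
    and init: "\<forall>K\<ge>1. \<forall>i::int. u K i 0 = u0 K (real_of_int i * delta K)"
    and summ: "\<forall>K\<ge>1. \<forall>i::int. \<forall>t\<in>{0..T}.
                 rhs_term p G delta u K i t summable_on UNIV"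
    and ode: "\<forall>K\<ge>1. \<forall>i::int. \<forall>t\<in>{0..T}.
                ((\<lambda>s. u K i s) has_real_derivative
                   (R (real_of_int i * delta K) + (\<Sum>\<^sub>\<infinity>l. rhs_term p G delta u K i t l)))
                (at t within {0..T})"
  shows "\<exists>C. \<forall>K\<ge>1. \<forall>t\<in>{0..T}. \<forall>i::int. \<bar>real_of_int i * delta K\<bar> \<le> N \<longrightarrow>
           \<bar>(u K (i + 1) t - u K i t) / delta K\<bar> \<le> C"
proof -
  obtain LR where LRl: "lipschitz_on LR UNIV R" using A1_R by blast
  obtain Lp where Lpl: "lipschitz_on Lp UNIV p" using A1_p by blast
  have LR0: "LR \<ge> 0" using LRl by (rule lipschitz_on_nonneg)
  have Lp0: "Lp \<ge> 0" using Lpl by (rule lipschitz_on_nonneg)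
  obtain Rlo Rhi where Rb: "\<And>x. Rlo \<le> R x \<and> R x \<le> Rhi" using A1_Rbd by blast
  obtain plo phi where plo: "0 < plo" and pb: "\<And>x. plo \<le> p x \<and> p x \<le> phi" using A1_pbd by blast
  obtain f flo fhi where flo: "0 < flo" and fb: "\<And>x. flo \<le> f x \<and> f x \<le> fhi"
    and Gf: "\<And>x. G x = f x * exp (- \<bar>x\<bar>)" using A2_f by blast
  obtain L where L: "0 < L" "L < 1"
    and A4': "\<And>K i. K \<ge> 1 \<Longrightarrow> \<bar>u0 K (real_of_int (i + 1) * delta K) - u0 K (real_of_int i * delta K)\<bar> \<le> L * delta K"
    using A4 by blast
  obtain H where H: "H > 0" "\<And>n. norm (hK delta n) \<le> H"
    using convergent_imp_Bseq[OF convergentI[OF h_lim]] by (rule BseqE) blast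
  have phi0: "phi \<ge> 0" using pb[of 0] plo by linarith
  have fhi0: "fhi \<ge> 0" using fb[of 0] flo by linarith
  have RloRhi: "Rlo \<le> Rhi" using Rb[of 0] by linarith
  define M0 where "M0 = phi * fhi * (2 * (1 + (1 - L) * H) / (1 - L))"
  have M00: "M0 \<ge> 0" unfolding M0_def using phi0 fhi0 L H by simp
  define \<kappa> where "\<kappa> = Lp / plo"
  have ka: "\<kappa> \<ge> 0" unfolding \<kappa>_def using Lp0 plo by simp
  define C where "C = L + (LR + \<kappa> * (Rhi + M0 - Rlo)) * T"
  have Rlip: "R (real_of_int (i+\<sigma>) * d) - R (real_of_int i * d) \<le> LR * d"
    if "\<sigma> \<in> {1,-1}" "d > 0" for i \<sigma> :: int and d :: real
  proof -
    have "dist (R (real_of_int (i+\<sigma>) * d)) (R (real_of_int i * d)) \<le> LR * dist (real_of_int (i+\<sigma>) * d) (real_of_int i * d)"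
      by (rule lipschitz_onD[OF LRl]) auto
    moreover have "dist (real_of_int (i+\<sigma>) * d) (real_of_int i * d) = d"
      using that by (auto simp: dist_real_def algebra_simps)
    ultimately show ?thesis by (simp add: dist_real_def)
  qed
  have plip: "p (real_of_int (i+\<sigma>) * d) \<le> (1 + \<kappa> * d) * p (real_of_int i * d)"
    if "\<sigma> \<in> {1,-1}" "d > 0" for i \<sigma> :: int and d :: real
  proof -
    have "dist (p (real_of_int (i+\<sigma>) * d)) (p (real_of_int i * d)) \<le> Lp * dist (real_of_int (i+\<sigma>) * d) (real_of_int i * d)"
      by (rule lipschitz_onD[OF Lpl]) auto
    moreover have "dist (real_of_int (i+\<sigma>) * d) (real_of_int i * d) = d"
      using that by (auto simp: dist_real_def algebra_simps)
    ultimately have a: "p (real_of_int (i+\<sigma>) * d) \<le> p (real_of_int i * d) + Lp * d" by (simp add: dist_real_def)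
    have "Lp * d = \<kappa> * d * plo" unfolding \<kappa>_def using plo by simp
    also have "\<dots> \<le> \<kappa> * d * p (real_of_int i * d)" using pb ka that by (intro mult_left_mono) auto
    finally show ?thesis using a by (simp add: algebra_simps)
  qed
  show ?thesis
  proof (intro exI[of _ C] allI impI ballI)
    fix K :: nat and t :: real and i :: int
    assume K: "K \<ge> 1" and t: "t \<in> {0..T}" and "\<bar>real_of_int i * delta K\<bar> \<le> N"
    have dl: "delta K > 0" using delta_pos K by blast
    define U where "U = u K"
    define Rs where "Rs j = R (real_of_int j * delta K)" for j
    have A4U: "\<bar>U (j+1) 0 - U j 0\<bar> \<le> L * delta K" for j
      unfolding U_def using init K A4'[OF K, of j] by simp
    have key: "\<bar>U (i+1) t - U i t\<bar> \<le> delta K * C"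
    proof (cases "K = 1")
      case True
      have h1: "hK delta K = 0" unfolding hK_def True by simp
      have rz: "rhs_term p G delta u K j s = (\<lambda>l. 0)" for j s
        unfolding rhs_term_def h1 by simp
      have b: "\<bar>U (i+1) t - U i t\<bar> \<le> L * delta K + LR * delta K * T"
      proof (rule K1_case[where Rs=Rs and U=U and \<delta>="delta K" and L=L and LR=LR, OF T_pos _ _ A4U _ t])
        show "\<bar>Rs (j+1) - Rs j\<bar> \<le> LR * delta K" for j
        proof -
          have "dist (Rs (j+1)) (Rs j) \<le> LR * dist (real_of_int (j+1) * delta K) (real_of_int j * delta K)"
            unfolding Rs_def by (rule lipschitz_onD[OF LRl]) auto
          moreover have "dist (real_of_int (j+1) * delta K) (real_of_int j * delta K) = delta K"
            using dl by (auto simp: dist_real_def algebra_simps)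
          ultimately show ?thesis by (simp add: dist_real_def)
        qed
        show "(U j has_real_derivative Rs j) (at s within {0..T})" if "s \<in> {0..T}" for j s
        proof -
          have "(u K j has_real_derivative R (real_of_int j * delta K) + (\<Sum>\<^sub>\<infinity>l. rhs_term p G delta u K j s l)) (at s within {0..T})"
            using ode K that by blast
          then show ?thesis unfolding U_def Rs_def rz by simp
        qed
        show "LR * delta K \<ge> 0" using LR0 dl by simp
      qed
      have "L * delta K + LR * delta K * T \<le> delta K * C"
      proof -
        have "0 \<le> \<kappa> * (Rhi + M0 - Rlo) * T" using ka M00 RloRhi T_pos by simp
        then have "L + LR * T \<le> C" unfolding C_def by (simp add: algebra_simps)
        then have "delta K * (L + LR * T) \<le> delta K * C" using dl by (intro mult_left_mono) auto
        then show ?thesis by (simp add: algebra_simps)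
      qed
      then show ?thesis using b by linarith
    next
      case False
      then have K2: "K \<ge> 2" using K by simp
      define lam where "lam = ln (real K)"
      have lam: "lam > 0" unfolding lam_def using K2 by simp
      define h where "h = hK delta K"
      have hdef: "h = delta K * lam" unfolding h_def hK_def lam_def by simp
      have hpos: "h > 0" unfolding hdef using dl lam by simp
      have hH: "h \<le> H" using H(2)[of K] unfolding h_def by simp
      define a where "a j l = p (real_of_int (j+l) * delta K) * h * G (real_of_int l * h)" for j l
      have rhs_eq: "rhs_term p G delta u K j s = (\<lambda>l. a j l * exp (lam * (U (j+l) s - U j s)))" for j s
        unfolding rhs_term_def a_def U_def h_def lam_def by (simp add: add.commute)
      have "\<bar>U (i+1) t - U i t\<bar> \<le> delta K * (L + (LR + \<kappa> * (Rhi + M0 - Rlo)) * T)"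
      proof (rule per_K[where a=a and Rs=Rs and lam=lam and U=U and \<delta>="delta K" and L=L and LR=LR and \<kappa>=\<kappa> and Rlo=Rlo and Rhi=Rhi, OF lam dl T_pos _ _ ka _ _ _ _ _ A4U t])
        show "a j l \<ge> 0" for j l
        proof -
          have "0 \<le> p (real_of_int (j+l) * delta K)" using pb[of "real_of_int (j+l) * delta K"] plo by linarith
          moreover have "0 \<le> G (real_of_int l * h)" using A2_pos by (simp add: less_imp_le)
          ultimately show ?thesis unfolding a_def using hpos by simp
        qed
        show "a (j+\<sigma>) l \<le> (1 + \<kappa> * delta K) * a j l" if "\<sigma> \<in> {1,-1}" for j l \<sigma>
        proof -
          have "p (real_of_int ((j+l)+\<sigma>) * delta K) \<le> (1 + \<kappa> * delta K) * p (real_of_int (j+l) * delta K)"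
            by (rule plip[OF that dl])
          then have "p (real_of_int ((j+l)+\<sigma>) * delta K) * (h * G (real_of_int l * h))
              \<le> (1 + \<kappa> * delta K) * p (real_of_int (j+l) * delta K) * (h * G (real_of_int l * h))"
            using hpos A2_pos by (intro mult_right_mono) (auto simp: less_imp_le)
          moreover have "(j+l)+\<sigma> = (j+\<sigma>)+l" by simp
          ultimately show ?thesis unfolding a_def by (simp add: algebra_simps)
        qed
        show "Rs (j+\<sigma>) - Rs j \<le> LR * delta K" if "\<sigma> \<in> {1,-1}" for j \<sigma>
          unfolding Rs_def by (rule Rlip[OF that dl])
        show "Rlo \<le> Rs j \<and> Rs j \<le> Rhi" for j unfolding Rs_def by (rule Rb)
        show "(\<lambda>l. a j l * exp (lam * (U (j+l) s - U j s))) summable_on UNIV" if "s \<in> {0..T}" for j s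
        proof -
          have "rhs_term p G delta u K j s summable_on UNIV" using summ K that by blast
          then show ?thesis unfolding rhs_eq .
        qed
        show "(U j has_real_derivative Rs j + (\<Sum>\<^sub>\<infinity>l. a j l * exp (lam * (U (j+l) s - U j s)))) (at s within {0..T})"
          if "s \<in> {0..T}" for j s
        proof -
          have "(u K j has_real_derivative R (real_of_int j * delta K) + (\<Sum>\<^sub>\<infinity>l. rhs_term p G delta u K j s l)) (at s within {0..T})"
            using ode K that by blast
          then show ?thesis unfolding rhs_eq Rs_def U_def .
        qed
        show "(\<Sum>\<^sub>\<infinity>l. a j l * exp (lam * (U (j+l) 0 - U j 0))) \<le> M0" for j
          unfolding M0_def
        proof (rule M0_bound[where a="a j" and V="\<lambda>l. U (j+l) 0 - U j 0", OF hpos hH L phi0 fhi0 lam dl hdef])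
          show "a j l \<le> phi * h * (fhi * exp (- (\<bar>real_of_int l\<bar> * h)))" for l
          proof -
            have G1: "G (real_of_int l * h) \<le> fhi * exp (- (\<bar>real_of_int l\<bar> * h))"
              using Gf[of "real_of_int l * h"] fb[of "real_of_int l * h"] hpos
              by (simp add: abs_mult mult_right_mono)
            have "a j l = p (real_of_int (j+l) * delta K) * (h * G (real_of_int l * h))"
              unfolding a_def by simp
            also have "\<dots> \<le> phi * (h * (fhi * exp (- (\<bar>real_of_int l\<bar> * h))))"
              using pb[of "real_of_int (j+l) * delta K"] G1 hpos A2_pos phi0
              by (intro mult_mono) (auto simp: less_imp_le)
            finally show ?thesis by (simp add: algebra_simps)
          qed
          show "U (j+l) 0 - U j 0 \<le> L * delta K * \<bar>real_of_int l\<bar>" for l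
            using chain_int[where f="\<lambda>j. U j 0", OF A4U, of j l] by simp
          show "(\<lambda>l. a j l * exp (lam * (U (j+l) 0 - U j 0))) summable_on UNIV"
          proof -
            have "rhs_term p G delta u K j 0 summable_on UNIV" using summ K T_pos by auto
            then show ?thesis unfolding rhs_eq .
          qed
        qed
      qed
      then show ?thesis unfolding C_def .
    qed
    show "\<bar>(u K (i + 1) t - u K i t) / delta K\<bar> \<le> C"
      using key dl unfolding U_def by (simp add: abs_divide pos_divide_le_eq mult.commute)
  qed
qed

end
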